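(* Let $q=p^m$ with $p$ prime, let $k\in\mathbb N$ with $k\mid\frac{q-1}{p-1}$, put $n=\frac{q-1}{k}$, and suppose $n$ is a primitive divisor of $q-1$. Let $d$ be the minimum nonzero weight and $d'$ the maximum weight of $\mathcal C(k,q)$, and let $\lambda(\Gamma)=\max\{n-\frac{p}{p-1}d,\ \frac{p}{p-1}d'-n\}$ for $\Gamma=\Gamma(k,q)$. If $\Gamma(k,q)$ is Ramanujan and $d\le\frac{p-1}{p}n$, then $$d\ge\tfrac{p-1}{p}\big(n-2\sqrt{n-1}\big).$$ Moreover, if $\lambda(\Gamma)=n-\frac{p}{p-1}d$, then $\Gamma(k,q)$ is Ramanujan if and only if $d\ge\frac{p-1}{p}(n-2\sqrt{n-1})$.
   Context: Let $p$ be prime, $q=p^m$, $\omega$ a primitive element of $\mathbb F_q$, $\mathrm{Tr}_{q/p}$ the trace to $\mathbb F_p$. For $k\mid q-1$, $R_k=\{x^k:x\in\mathbb F_q^*\}$, and $\Gamma(k,q)$ is the Cayley graph on $\mathbb F_q$ with $u\to v$ an edge iff $v-u\in R_k$; it is $n$-regular. $\mathcal C(k,q)=\{(\mathrm{Tr}_{q/p}(\gamma\omega^{ki}))_{i=0}^{n-1}:\gamma\in\mathbb F_q\}\subseteq\mathbb F_p^n$. A divisor $n$ of $p^m-1$ is primitive if $n\nmid p^a-1$ for all $a<m$. A connected $n$-regular graph is Ramanujan if every eigenvalue $\lambda$ with $|\lambda|\ne n$ satisfies $|\lambda|\le2\sqrt{n-1}$; under the hypotheses, $\lambda(\Gamma)$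 equals the largest such $|\lambda|$. *)

theory Defs
  imports Complex_Main "HOL-Computational_Algebra.Primes"
begin

text \<open>Finite field F_q is modelled by a finite field type 'a with CARD('a) = p^m.\<close>

definition primitive_element :: "'a::{finite,field} \<Rightarrow> bool" where
  "primitive_element w \<longleftrightarrow> w \<noteq> 0 \<and> (\<forall>x. x \<noteq> 0 \<longrightarrow> (\<exists>i::nat. x = w ^ i))"

definition trace :: "nat \<Rightarrow> nat \<Rightarrow> 'a::{finite,field} \<Rightarrow> 'a" where
  "trace p m x = (\<Sum>j<m. x ^ (p ^ j))"

definition kth_powers :: "nat \<Rightarrow> 'a::{finite,field} set" where
  "kth_powers k = {x ^ k | x. x \<noteq> 0}"

definition cayley_edge :: "nat \<Rightarrow> 'a::{finite,field} \<Rightarrow> 'a \<Rightarrow> bool" where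
  "cayley_edge k u v \<longleftrightarrow> v - u \<in> kth_powers k"

definition graph_regular :: "('a::finite \<Rightarrow> 'a \<Rightarrow> bool) \<Rightarrow> nat \<Rightarrow> bool" where
  "graph_regular E n \<longleftrightarrow> (\<forall>u. card {v. E u v} = n \<and> card {v. E v u} = n)"

definition graph_connected :: "('a::finite \<Rightarrow> 'a \<Rightarrow> bool) \<Rightarrow> bool" where
  "graph_connected E \<longleftrightarrow> (\<forall>u v. E\<^sup>*\<^sup>* u v)"

definition graph_eigenvalue :: "('a::finite \<Rightarrow> 'a \<Rightarrow> bool) \<Rightarrow> complex \<Rightarrow> bool" where
  "graph_eigenvalue E lam \<longleftrightarrow>
     (\<exists>f :: 'a \<Rightarrow> complex. f \<noteq> (\<lambda>_. 0) \<and> (\<forall>u. (\<Sum>v\<in>{v. E u v}. f v) = lam * f u))"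

definition ramanujan :: "('a::finite \<Rightarrow> 'a \<Rightarrow> bool) \<Rightarrow> nat \<Rightarrow> bool" where
  "ramanujan E n \<longleftrightarrow> graph_connected E \<and> graph_regular E n \<and>
     (\<forall>lam. graph_eigenvalue E lam \<longrightarrow> cmod lam \<noteq> real n \<longrightarrow> cmod lam \<le> 2 * sqrt (real n - 1))"

definition cw_weight :: "nat \<Rightarrow> nat \<Rightarrow> 'a::{finite,field} \<Rightarrow> nat \<Rightarrow> nat \<Rightarrow> 'a \<Rightarrow> nat" where
  "cw_weight p m w k n g = card {i. i < n \<and> trace p m (g * w ^ (k * i)) \<noteq> 0}"

definition code_weights :: "nat \<Rightarrow> nat \<Rightarrow> 'a::{finite,field} \<Rightarrow> nat \<Rightarrow> nat \<Rightarrow> nat set" where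
  "code_weights p m w k n = range (cw_weight p m w k n)"

definition min_weight :: "nat \<Rightarrow> nat \<Rightarrow> 'a::{finite,field} \<Rightarrow> nat \<Rightarrow> nat \<Rightarrow> nat" where
  "min_weight p m w k n = Min (code_weights p m w k n - {0})"

definition max_weight :: "nat \<Rightarrow> nat \<Rightarrow> 'a::{finite,field} \<Rightarrow> nat \<Rightarrow> nat \<Rightarrow> nat" where
  "max_weight p m w k n = Max (code_weights p m w k n)"

definition primitive_divisor :: "nat \<Rightarrow> nat \<Rightarrow> nat \<Rightarrow> bool" where
  "primitive_divisor p m n \<longleftrightarrow> n dvd p ^ m - 1 \<and> (\<forall>a. 0 < a \<and> a < m \<longrightarrow> \<not> n dvd p ^ a - 1)"

end

theory Submission
  imports Defs "HOL-Number_Theory.Residues" "HOL-Computational_Algebra.Polynomial"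
begin


locale ctx =
  fixes p m :: nat and w :: "'a::{finite,field}" and k n :: nat
  assumes pp: "prime p" and card: "card (UNIV :: 'a set) = p ^ m"
    and prim: "primitive_element w"
    and kdvd: "k dvd (p ^ m - 1) div (p - 1)"
    and ndef: "n = (p ^ m - 1) div k"
    and pdiv: "primitive_divisor p m n"
begin

abbreviation "q \<equiv> p ^ m"

lemma p2: "p \<ge> 2" using pp prime_ge_2_nat by blast
lemma p0: "p > 0" using p2 by simp

lemma q2: "q \<ge> 2"
proof -
  have "card {0::'a, 1} \<le> card (UNIV :: 'a set)" by (rule card_mono) auto
  thus ?thesis using card by simp
qed

lemma m1: "m \<ge> 1" using q2 by (cases m) auto

lemma charp: "CHAR('a) = p"
proof -
  have pos: "CHAR('a) > 0" by (rule finite_imp_CHAR_pos) simp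
  hence pr: "prime CHAR('a)" by (rule prime_CHAR_semidom)
  have "CHAR('a) dvd p ^ m" using CHAR_dvd_CARD[where 'a='a] card by simp
  hence "CHAR('a) dvd p" using pr prime_dvd_power by blast
  thus ?thesis using pr pp by (simp add: primes_dvd_imp_eq)
qed

lemma pow_card: "(x::'a) ^ q = x"
proof (cases "x = 0")
  case False
  have "x * (\<Prod>y\<in>UNIV-{0}. x * y) = x * x ^ (card (UNIV :: 'a set) - 1) * \<Prod>(UNIV-{0::'a})"
    by (simp add: prod.distrib mult_ac)
  also have "x * x ^ (card (UNIV :: 'a set) - 1) = x ^ Suc (card (UNIV :: 'a set) - 1)"
    by (subst power_Suc) auto
  also have "Suc (card (UNIV :: 'a set) - 1) = card (UNIV :: 'a set)"
    using finite_UNIV_card_ge_0[where ?'a = 'a] by simp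
  also have "(\<Prod>y\<in>UNIV-{0}. x * y) = (\<Prod>y\<in>UNIV-{0::'a}. y)"
    by (rule prod.reindex_bij_witness[of _ "\<lambda>y. y / x" "\<lambda>y. x * y"]) (use False in auto)
  finally show ?thesis using card
    by simp
qed (use q2 p2 in auto)

lemma frob_add: "((x::'a) + y) ^ (p ^ j) = x ^ (p ^ j) + y ^ (p ^ j)"
  by (rule freshmans_dream') (auto simp: charp pp)

lemma frob_sum: "(sum (f :: 'b \<Rightarrow> 'a) A) ^ (p ^ j) = (\<Sum>i\<in>A. f i ^ (p ^ j))"
  by (rule freshmans_dream_sum') (auto simp: charp pp)

definition P :: "'a set" where "P = of_nat ` {..<p}"

lemma P_alt: "P = range of_nat"
proof -
  have "of_nat j = (of_nat (j mod p) :: 'a)" for j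
    by (simp add: of_nat_eq_iff_cong_CHAR charp cong_def)
  show ?thesis unfolding P_def
  proof (intro equalityI subsetI)
    fix x assume "x \<in> range (of_nat :: nat \<Rightarrow> 'a)"
    then obtain j where "x = of_nat j" by auto
    thus "x \<in> of_nat ` {..<p}" using \<open>of_nat j = (of_nat (j mod p) :: 'a)\<close> p0
      by (intro image_eqI[of _ _ "j mod p"]) auto
  qed auto
qed

lemma inj_P: "inj_on (of_nat :: nat \<Rightarrow> 'a) {..<p}"
  by (auto simp: inj_on_def of_nat_eq_iff_cong_CHAR charp cong_def)

lemma finite_P: "finite P" by (simp add: P_def)

lemma card_P: "card P = p"
  unfolding P_def using inj_P by (simp add: card_image)

lemma of_nat_frob: "(of_nat j :: 'a) ^ p = of_nat j"
proof (induction j)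
  case (Suc j)
  have "(1 + of_nat j :: 'a) ^ p = 1 + of_nat j ^ p" using frob_add[of 1 "of_nat j" 1] by simp
  thus ?case using Suc by simp
qed (use p2 in auto)

lemma P_frob: "c \<in> P \<Longrightarrow> c ^ p = c"
  using of_nat_frob by (auto simp: P_alt)

lemma P_frob': "c \<in> P \<Longrightarrow> c ^ (p ^ j) = c"
proof (induction j)
  case (Suc j)
  have "c ^ (p ^ Suc j) = (c ^ p) ^ (p ^ j)" by (simp add: power_mult)
  thus ?case using Suc P_frob by simp
qed auto

lemma P_char: "c \<in> P \<longleftrightarrow> c ^ p = c"
proof
  assume h: "c ^ p = c"
  define g :: "'a poly" where "g = monom 1 p + [:0, -1:]"
  have dg: "degree g = p" unfolding g_def using p2
    by (subst degree_add_eq_left) (auto simp: degree_monom_eq)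
  hence "g \<noteq> 0" using p2 by auto
  hence "card {x. poly g x = 0} \<le> p" using card_poly_roots_bound dg by metis
  moreover have "P \<subseteq> {x. poly g x = 0}" using P_frob by (auto simp: g_def poly_monom)
  ultimately have "P = {x. poly g x = 0}" using card_P card_mono[of "{x. poly g x = 0}" P]
    by (intro card_subset_eq) auto
  moreover have "poly g c = 0" using h by (simp add: g_def poly_monom)
  ultimately show "c \<in> P" by auto
qed (rule P_frob)

lemma P_0 [simp]: "0 \<in> P" and P_1 [simp]: "1 \<in> P"
  by (auto simp: P_char p0)

lemma P_add: "a \<in> P \<Longrightarrow> b \<in> P \<Longrightarrow> a + b \<in> P"
  using frob_add[of a b 1] by (simp add: P_char)
lemma P_mult: "a \<in> P \<Longrightarrow> b \<in> P \<Longrightarrow> a * b \<in> P"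
  by (simp add: P_char power_mult_distrib)
lemma P_inv: "a \<in> P \<Longrightarrow> inverse a \<in> P"
  by (simp add: P_char power_inverse)
lemma P_uminus: "a \<in> P \<Longrightarrow> - a \<in> P"
  using minus_power_prime_CHAR[of p a] by (simp add: P_char charp pp)
lemma P_diff: "a \<in> P \<Longrightarrow> b \<in> P \<Longrightarrow> a - b \<in> P"
  using P_add[of a "-b"] P_uminus by simp


abbreviation Tr :: "'a \<Rightarrow> 'a" where "Tr \<equiv> trace p m"

lemma Tr_frob: "Tr x ^ p = Tr x"
proof -
  define f where "f j = x ^ (p ^ j)" for j
  have "Tr x ^ p = (\<Sum>j<m. f (Suc j))"
    unfolding trace_def f_def using frob_sum[of "\<lambda>j. x ^ (p ^ j)" "{..<m}" 1]
    by (simp add: power_mult[symmetric] mult.commute)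
  also have "\<dots> = (\<Sum>j<Suc m. f j) - f 0" by (subst sum.lessThan_Suc_shift) simp
  also have "\<dots> = (\<Sum>j<m. f j) + f m - f 0" by simp
  also have "f m = f 0" using pow_card by (simp add: f_def)
  finally show ?thesis by (simp add: trace_def f_def)
qed

lemma Tr_P: "Tr x \<in> P" using Tr_frob by (simp add: P_char)

lemma Tr_add: "Tr (x + y) = Tr x + Tr y"
  unfolding trace_def by (simp add: frob_add sum.distrib)

lemma Tr_smult: "c \<in> P \<Longrightarrow> Tr (c * x) = c * Tr x"
  unfolding trace_def by (simp add: power_mult_distrib P_frob' sum_distrib_left)

lemma Tr_0 [simp]: "Tr 0 = 0"
  unfolding trace_def using p0 by (simp add: power_0_left)

lemma Tr_uminus: "Tr (- x) = - Tr x"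
  using Tr_add[of x "-x"] by (metis add.commute eq_neg_iff_add_eq_0 add.right_inverse Tr_0)

lemma Tr_nonzero: "\<exists>x. Tr x \<noteq> 0"
proof (rule ccontr)
  assume "\<not> ?thesis"
  hence all: "\<forall>x. Tr x = 0" by simp
  define T :: "'a poly" where "T = (\<Sum>j<m. monom 1 (p ^ j))"
  have pT: "poly T x = Tr x" for x unfolding T_def trace_def by (simp add: poly_sum poly_monom)
  have inj: "p ^ j = p ^ (m - 1) \<longleftrightarrow> j = m - 1" for j using p2 by (simp add: power_inject_exp)
  have "coeff T (p ^ (m - 1)) = (\<Sum>j<m. if p ^ j = p ^ (m - 1) then 1 else 0)"
    unfolding T_def by (simp add: coeff_sum coeff_monom)
  also have "\<dots> = (\<Sum>j<m. if j = m - 1 then 1 else 0)"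
    by (rule sum.cong) (use inj in auto)
  also have "\<dots> = 1" using m1 by simp
  finally have "T \<noteq> 0" by auto
  have "degree T \<le> p ^ (m - 1)" unfolding T_def
    by (rule degree_sum_le) (use p2 in \<open>auto simp: degree_monom_eq intro!: power_increasing\<close>)
  moreover have "card {x. poly T x = 0} \<le> degree T" by (rule card_poly_roots_bound) fact
  moreover have "{x. poly T x = 0} = UNIV" using all pT by auto
  ultimately have "p ^ m \<le> p ^ (m - 1)" using card by simp
  moreover have "p ^ (m - 1) < p ^ m" using p2 m1 by (intro power_strict_increasing) auto
  ultimately show False by simp
qed

lemma Tr_one: "\<exists>x. Tr x = 1"
proof -
  obtain x where x: "Tr x \<noteq> 0" using Tr_nonzero by blast
  have "Tr (inverse (Tr x) * x) = inverse (Tr x) * Tr x"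
    by (rule Tr_smult) (simp add: P_inv Tr_P)
  thus ?thesis using x by auto
qed


definition zeta :: complex where "zeta = cis (2 * pi / real p)"

lemma zeta_p: "zeta ^ p = 1"
  using p0 by (simp add: zeta_def DeMoivre)

lemma zeta_ne1: "zeta \<noteq> 1"
proof
  assume "zeta = 1"
  then obtain k :: int where "2 * pi / real p = real_of_int k * 2 * pi"
    using cos_one_2pi_int[of "2 * pi / real p"] by (auto simp: zeta_def complex_eq_iff)
  with p0 have "real p * of_int k = 1" by (simp add: field_simps)
  also have "real p * of_int k = of_int (int p * k)" by simp
  also have "1 = (of_int 1 :: real)" by simp
  also note of_int_eq_iff
  finally show False using p2 by (auto simp: zmult_eq_1_iff)
qed

lemma zeta_mod: "zeta ^ j = zeta ^ (j mod p)"
proof -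
  have "zeta ^ j = zeta ^ (p * (j div p) + j mod p)" by (metis div_mult_mod_eq mult.commute)
  also have "\<dots> = (zeta ^ p) ^ (j div p) * zeta ^ (j mod p)" by (simp only: power_add power_mult)
  finally show ?thesis by (simp add: zeta_p)
qed

lemma sum_zeta: "(\<Sum>j<p. zeta ^ j) = 0"
  using zeta_ne1 by (simp add: geometric_sum zeta_p)

definition idx :: "'a \<Rightarrow> nat" where "idx a = inv_into {..<p} of_nat a"

lemma idx: "a \<in> P \<Longrightarrow> idx a < p \<and> of_nat (idx a) = a"
proof -
  assume "a \<in> P"
  hence a: "a \<in> of_nat ` {..<p}" by (simp add: P_def)
  show ?thesis unfolding idx_def using inv_into_into[OF a] f_inv_into_f[OF a] by auto
qed

lemma idx_of_nat: "idx (of_nat j :: 'a) = j mod p"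
proof -
  have e: "(of_nat j :: 'a) = of_nat (j mod p)"
    by (simp add: of_nat_eq_iff_cong_CHAR charp cong_def)
  show ?thesis unfolding idx_def e using inj_P p0 by (intro inv_into_f_f) auto
qed

definition chi :: "'a \<Rightarrow> complex" where "chi a = zeta ^ idx a"

lemma chi_of_nat: "chi (of_nat j) = zeta ^ j"
  by (simp add: chi_def idx_of_nat zeta_mod[symmetric])

lemma chi_add: "a \<in> P \<Longrightarrow> b \<in> P \<Longrightarrow> chi (a + b) = chi a * chi b"
proof -
  assume a: "a \<in> P" and b: "b \<in> P"
  have e: "a + b = of_nat (idx a + idx b)" using idx[OF a] idx[OF b] by simp
  have "chi (a + b) = zeta ^ (idx a + idx b)" unfolding e by (rule chi_of_nat)
  thus ?thesis by (simp add: chi_def power_add)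
qed

lemma chi_0 [simp]: "chi 0 = 1" using chi_of_nat[of 0] by simp
lemma chi_1 [simp]: "chi 1 = zeta" using chi_of_nat[of 1] by simp

lemma sum_chi: "(\<Sum>a\<in>P. chi a) = 0"
proof -
  have "(\<Sum>a\<in>P. chi a) = (\<Sum>j<p. chi (of_nat j))"
    unfolding P_def by (simp add: sum.reindex[OF inj_P])
  thus ?thesis by (simp add: chi_of_nat sum_zeta)
qed

lemma sum_chi_nz: "(\<Sum>a\<in>P-{0}. chi a) = -1"
proof -
  have "(\<Sum>a\<in>P. chi a) = chi 0 + (\<Sum>a\<in>P-{0}. chi a)"
    by (subst sum.remove[of _ 0]) (auto simp: P_def[symmetric] finite_P)
  thus ?thesis using sum_chi by (simp add: eq_neg_iff_add_eq_0 add.commute)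
qed

definition psi :: "'a \<Rightarrow> complex" where "psi x = chi (Tr x)"

lemma psi_add: "psi (x + y) = psi x * psi y"
  by (simp add: psi_def Tr_add chi_add Tr_P)

lemma psi_0 [simp]: "psi 0 = 1" by (simp add: psi_def)

lemma psi_sum: "(\<Sum>x\<in>UNIV. psi x) = 0"
proof -
  obtain a where a: "Tr a = 1" using Tr_one by blast
  have "(\<Sum>x\<in>UNIV. psi x) = (\<Sum>x\<in>UNIV. psi (x + a))"
    by (rule sum.reindex_bij_witness[of _ "\<lambda>x. x + a" "\<lambda>x. x - a"]) auto
  also have "\<dots> = zeta * (\<Sum>x\<in>UNIV. psi x)"
    unfolding psi_add sum_distrib_left by (simp add: psi_def a mult.commute)
  finally have "(1 - zeta) * (\<Sum>x\<in>UNIV. psi x) = 0" by (simp add: algebra_simps)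
  thus ?thesis using zeta_ne1 by simp
qed

lemma psi_sum_mult: "z \<noteq> 0 \<Longrightarrow> (\<Sum>g\<in>UNIV. psi (g * z)) = 0"
proof -
  assume z: "z \<noteq> 0"
  have "(\<Sum>g\<in>UNIV. psi (g * z)) = (\<Sum>x\<in>UNIV. psi x)"
    by (rule sum.reindex_bij_witness[of _ "\<lambda>x. x / z" "\<lambda>g. g * z"]) (use z in auto)
  thus ?thesis using psi_sum by simp
qed


abbreviation "Q \<equiv> q - 1"

lemma Q_pos: "Q > 0" using q2 by simp

lemma pm1_dvd: "(p - 1) dvd Q"
proof -
  have "[p = 1] (mod (p - 1))" using p2 by (subst cong_le_nat) (auto intro: exI[of _ 1])
  hence "[p ^ m = 1 ^ m] (mod (p - 1))" by (rule cong_pow)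
  thus ?thesis by (intro cong_to_1_nat) simp
qed

lemma Q_split: "Q = (p - 1) * (Q div (p - 1))" using pm1_dvd by simp

lemma k_dvd_Q: "k dvd Q"
  using kdvd Q_split by (metis dvd_mult)

lemma k_pos: "k > 0"
proof (rule ccontr)
  assume "\<not> k > 0"
  hence "Q div (p - 1) = 0" using kdvd by simp
  thus False using Q_split Q_pos by simp
qed

lemma nk: "n * k = Q" using k_dvd_Q ndef by simp

lemma n_pos: "n > 0" using nk Q_pos by (cases n) auto

lemma w_ne0: "w \<noteq> 0" using prim by (simp add: primitive_element_def)

lemma w_Q: "w ^ Q = 1"
proof -
  have sq: "Suc Q = q" using q2 by simp
  have "w * w ^ Q = w * 1" using pow_card[of w] unfolding power_Suc[symmetric] sq by simp
  thus ?thesis using w_ne0 by simp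
qed

lemma w_mod: "w ^ i = w ^ (i mod Q)"
proof -
  have "w ^ i = w ^ (Q * (i div Q) + i mod Q)" by (metis div_mult_mod_eq mult.commute)
  also have "\<dots> = (w ^ Q) ^ (i div Q) * w ^ (i mod Q)" by (simp only: power_add power_mult)
  also have "\<dots> = w ^ (i mod Q)" unfolding w_Q by simp
  finally show ?thesis .
qed

lemma w_img: "(\<lambda>i. w ^ i) ` {..<Q} = UNIV - {0}"
proof (intro equalityI subsetI)
  fix x :: 'a assume "x \<in> UNIV - {0}"
  then obtain i where "x = w ^ i" using prim by (auto simp: primitive_element_def)
  thus "x \<in> (\<lambda>i. w ^ i) ` {..<Q}" using w_mod Q_pos by (intro image_eqI[of _ _ "i mod Q"]) auto
qed (use w_ne0 in auto)

lemma w_inj: "inj_on (\<lambda>i. w ^ i) {..<Q}"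
proof (rule eq_card_imp_inj_on)
  have "card (UNIV - {0::'a}) = Q" using card by (simp add: card_Diff_singleton)
  thus "card ((\<lambda>i. w ^ i) ` {..<Q}) = card {..<Q}" unfolding w_img by simp
qed simp

lemma w_eq: "w ^ i = w ^ j \<longleftrightarrow> i mod Q = j mod Q"
proof
  assume "w ^ i = w ^ j"
  hence "w ^ (i mod Q) = w ^ (j mod Q)" using w_mod by metis
  thus "i mod Q = j mod Q" using w_inj Q_pos by (auto simp: inj_on_def)
qed (metis w_mod)

lemma w_eq1: "w ^ i = 1 \<longleftrightarrow> Q dvd i"
  using w_eq[of i 0] by (simp add: dvd_eq_mod_eq_0)

definition beta :: 'a where "beta = w ^ k"

abbreviation R :: "'a set" where "R \<equiv> kth_powers k"

lemma beta_n: "beta ^ n = 1" using w_Q nk by (simp add: beta_def power_mult[symmetric] mult.commute)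

lemma beta_mod: "beta ^ i = beta ^ (i mod n)"
proof -
  have "beta ^ i = beta ^ (n * (i div n) + i mod n)" by (metis div_mult_mod_eq mult.commute)
  also have "\<dots> = (beta ^ n) ^ (i div n) * beta ^ (i mod n)" by (simp only: power_add power_mult)
  finally show ?thesis by (simp add: beta_n)
qed

lemma beta_ne0: "beta \<noteq> 0" using w_ne0 by (simp add: beta_def)

lemma beta_inj: "inj_on (\<lambda>i. beta ^ i) {..<n}"
proof (rule inj_onI)
  fix i j assume i: "i \<in> {..<n}" and j: "j \<in> {..<n}" and e: "beta ^ i = beta ^ j"
  have "k * i < k * n" "k * j < k * n" using i j k_pos by auto
  moreover have "k * n = Q" using nk by (simp add: mult.commute)
  ultimately have "k * i < Q" "k * j < Q" by simp_all
  moreover have "w ^ (k * i) = w ^ (k * j)" using e by (simp add: beta_def power_mult)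
  ultimately have "k * i = k * j" using w_eq by simp
  thus "i = j" using k_pos by simp
qed

lemma R_eq: "R = (\<lambda>i. beta ^ i) ` {..<n}"
proof (intro equalityI subsetI)
  fix y assume "y \<in> R"
  then obtain x where x: "x \<noteq> 0" "y = x ^ k" by (auto simp: kth_powers_def)
  then obtain j where "x = w ^ j" using prim by (auto simp: primitive_element_def)
  hence "y = beta ^ j" using x by (simp add: beta_def power_mult[symmetric] mult.commute)
  hence "y = beta ^ (j mod n)" using beta_mod by simp
  thus "y \<in> (\<lambda>i. beta ^ i) ` {..<n}" using n_pos by auto
next
  fix y assume "y \<in> (\<lambda>i. beta ^ i) ` {..<n}"
  then obtain i where "y = beta ^ i" by auto
  hence "y = (w ^ i) ^ k" by (simp add: beta_def power_mult[symmetric] mult.commute)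
  thus "y \<in> R" using w_ne0 by (auto simp: kth_powers_def)
qed

lemma card_R: "card R = n" using R_eq beta_inj by (simp add: card_image)

lemma finite_R: "finite R" by simp

lemma P_in_beta: "c \<in> P \<Longrightarrow> c \<noteq> 0 \<Longrightarrow> \<exists>t<n. c = beta ^ t"
proof -
  assume c: "c \<in> P" "c \<noteq> 0"
  then obtain j where j: "c = w ^ j" using prim by (auto simp: primitive_element_def)
  have sp: "Suc (p - 1) = p" using p0 by simp
  have "c * c ^ (p - 1) = c * 1" using P_frob[OF c(1)] unfolding power_Suc[symmetric] sp by simp
  hence "c ^ (p - 1) = 1" using c by simp
  hence "w ^ (j * (p - 1)) = 1" using j by (simp add: power_mult)
  hence "Q dvd j * (p - 1)" by (simp add: w_eq1)
  hence "(p - 1) * (Q div (p - 1)) dvd (p - 1) * j" using Q_split by (simp add: mult.commute)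
  moreover have "0 < p - 1" using p2 by simp
  ultimately have "Q div (p - 1) dvd j" by (rule dvd_mult_cancel)
  hence "k dvd j" using kdvd dvd_trans by blast
  then obtain t where "j = k * t" by auto
  hence "c = beta ^ t" using j by (simp add: beta_def power_mult)
  hence "c = beta ^ (t mod n)" using beta_mod by simp
  thus ?thesis using n_pos by (intro exI[of _ "t mod n"]) auto
qed


end


context ctx begin

lemma P_of_nat: "of_nat j \<in> P" by (simp add: P_alt)
lemma beta_frob_inj: "i < m \<Longrightarrow> j < m \<Longrightarrow> beta ^ (p ^ i) = beta ^ (p ^ j) \<Longrightarrow> i = j"
proof -
  have main: "i = j" if ij: "i < j" "j < m" and e: "beta ^ (p ^ i) = beta ^ (p ^ j)" for i j
  proof (rule ccontr)
    define a where "a = i + (m - j)"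
    have a: "0 < a" "a < m" using ij by (auto simp: a_def)
    have "(beta ^ (p ^ i)) ^ (p ^ (m - j)) = (beta ^ (p ^ j)) ^ (p ^ (m - j))" using e by simp
    hence "beta ^ (p ^ a) = beta ^ (p ^ m)" using ij
      by (simp add: power_mult[symmetric] power_add[symmetric] a_def)
    hence "beta ^ (p ^ a) = beta" by (simp add: pow_card)
    moreover have "beta ^ (p ^ a) = beta * beta ^ (p ^ a - 1)" using p0
      by (metis power_Suc Suc_diff_1 zero_less_power)
    ultimately have "beta ^ (p ^ a - 1) = 1" using beta_ne0 by (metis mult_cancel_left1)
    hence "Q dvd k * (p ^ a - 1)" by (simp add: beta_def power_mult[symmetric] w_eq1)
    hence "k * n dvd k * (p ^ a - 1)" using nk by (simp add: mult.commute)
    hence "n dvd p ^ a - 1" using k_pos by simp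
    thus False using pdiv a by (auto simp: primitive_divisor_def)
  qed
  assume "i < m" "j < m" "beta ^ (p ^ i) = beta ^ (p ^ j)"
  thus "i = j" using main[of i j] main[of j i] by (cases i j rule: linorder_cases) auto
qed

lemma poly_frob: "(\<forall>i. coeff g i \<in> P) \<Longrightarrow> poly g (x ^ (p ^ j)) = (poly g x) ^ (p ^ j)"
proof -
  assume c: "\<forall>i. coeff g i \<in> P"
  have "(poly g x) ^ (p ^ j) = (\<Sum>i\<le>degree g. (coeff g i * x ^ i) ^ (p ^ j))"
    by (simp add: poly_altdef frob_sum)
  also have "\<dots> = (\<Sum>i\<le>degree g. coeff g i * (x ^ (p ^ j)) ^ i)"
    using c by (intro sum.cong refl) (simp add: power_mult_distrib P_frob' power_mult[symmetric] mult.commute)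
  finally show ?thesis by (simp add: poly_altdef)
qed

lemma poly_P_zero:
  assumes c: "\<forall>i. coeff g i \<in> P" and d: "degree g < m" and r: "poly g beta = 0"
  shows "g = 0"
proof (rule ccontr)
  assume g: "g \<noteq> 0"
  have "(\<lambda>j. beta ^ (p ^ j)) ` {..<m} \<subseteq> {x. poly g x = 0}"
    using r poly_frob[OF c] p0 by auto
  hence "card ((\<lambda>j. beta ^ (p ^ j)) ` {..<m}) \<le> card {x. poly g x = 0}"
    by (intro card_mono) auto
  moreover have "card ((\<lambda>j. beta ^ (p ^ j)) ` {..<m}) = m"
    using beta_frob_inj by (subst card_image) (auto simp: inj_on_def)
  moreover have "card {x. poly g x = 0} \<le> degree g" by (rule card_poly_roots_bound) fact
  ultimately show False using d by simp
qed

lemma closed_sum: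
  assumes add: "\<And>x y. x \<in> V \<Longrightarrow> y \<in> V \<Longrightarrow> x + y \<in> V" and z: "0 \<in> V"
  shows "(\<And>i. i \<in> A \<Longrightarrow> f i \<in> V) \<Longrightarrow> sum f A \<in> V"
  by (induction A rule: infinite_finite_induct) (use add z in auto)

lemma closed_of_nat:
  assumes add: "\<And>x y. x \<in> V \<Longrightarrow> y \<in> V \<Longrightarrow> x + y \<in> V" and z: "0 \<in> V"
  shows "x \<in> V \<Longrightarrow> (of_nat c :: 'a) * x \<in> V"
  by (induction c) (use add z in \<open>auto simp: distrib_right\<close>)

lemma span_all:
  assumes add: "\<And>x y. x \<in> V \<Longrightarrow> y \<in> V \<Longrightarrow> x + y \<in> V" and z: "0 \<in> V"
    and b: "\<And>i. beta ^ i \<in> V"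
  shows "V = UNIV"
proof -
  define C where "C = PiE {..<m} (\<lambda>_. {..<p})"
  define phi where "phi c = (\<Sum>i<m. (of_nat (c i) :: 'a) * beta ^ i)" for c
  have img: "phi ` C \<subseteq> V"
  proof
    fix y assume "y \<in> phi ` C"
    then obtain c where "y = phi c" by auto
    have "phi c \<in> V" unfolding phi_def
      by (intro closed_sum[OF add z] closed_of_nat[OF add z] b)
    thus "y \<in> V" using \<open>y = phi c\<close> by simp
  qed
  have inj: "inj_on phi C"
  proof (rule inj_onI)
    fix c c' assume cC: "c \<in> C" and cC': "c' \<in> C" and e: "phi c = phi c'"
    define g where "g = (\<Sum>i<m. monom ((of_nat (c i) :: 'a) - of_nat (c' i)) i)"
    have cg: "coeff g j = (if j < m then of_nat (c j) - of_nat (c' j) else 0)" for j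
      unfolding g_def by (simp add: coeff_sum coeff_monom)
    have "\<forall>i. coeff g i \<in> P" unfolding cg by (auto intro!: P_diff P_of_nat)
    moreover have "degree g < m"
    proof -
      have "degree g \<le> m - 1" unfolding g_def
        by (rule degree_sum_le) (auto intro: order.trans[OF degree_monom_le])
      thus ?thesis using m1 by simp
    qed
    moreover have "poly g beta = phi c - phi c'"
      unfolding g_def phi_def by (simp add: poly_sum poly_monom sum_subtractf algebra_simps)
    ultimately have "g = 0" using e poly_P_zero by simp
    hence "of_nat (c j) = (of_nat (c' j) :: 'a)" if "j < m" for j
      using cg[of j] that by simp
    hence "c j = c' j" if "j < m" for j
      using that inj_P cC cC' unfolding C_def by (auto simp: inj_on_def PiE_def Pi_def)
    thus "c = c'" using cC cC' unfolding C_def by (intro PiE_ext) auto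
  qed
  have "card C = p ^ m" unfolding C_def by (simp add: card_PiE)
  hence "card (phi ` C) = q" using inj by (simp add: card_image)
  hence "card (UNIV :: 'a set) \<le> card V" using card card_mono[OF _ img] by simp
  thus ?thesis using card_subset_eq[of UNIV V] card_mono[of UNIV V] by (metis finite top_greatest antisym card_seteq)
qed

lemma weight_pos: "g \<noteq> 0 \<Longrightarrow> cw_weight p m w k n g > 0"
proof (rule ccontr)
  assume g: "g \<noteq> 0" and "\<not> cw_weight p m w k n g > 0"
  hence "{i. i < n \<and> Tr (g * w ^ (k * i)) \<noteq> 0} = {}" by (simp add: cw_weight_def)
  hence z: "Tr (g * beta ^ i) = 0" if "i < n" for i using that by (auto simp: beta_def power_mult)
  have "{x. Tr (g * x) = 0} = UNIV"
  proof (rule span_all)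
    show "beta ^ i \<in> {x. Tr (g * x) = 0}" for i using z[of "i mod n"] beta_mod[of i] n_pos by simp
  qed (auto simp: distrib_left Tr_add)
  hence "Tr (g * (x / g)) = 0" for x by blast
  hence "Tr x = 0" for x using g by simp
  thus False using Tr_nonzero by blast
qed

abbreviation E :: "'a \<Rightarrow> 'a \<Rightarrow> bool" where "E \<equiv> cayley_edge k"

lemma E_trans: "E\<^sup>*\<^sup>* u v \<Longrightarrow> E\<^sup>*\<^sup>* (u + a) (v + a)"
proof (induction rule: rtranclp_induct)
  case (step y z)
  have "E (y + a) (z + a)" using step(2) by (simp add: cayley_edge_def)
  thus ?case using step(3) by simp
qed simp

lemma connected: "graph_connected E"
proof -
  have "{x. E\<^sup>*\<^sup>* 0 x} = UNIV"
  proof (rule span_all)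
    fix x y assume "x \<in> {x. E\<^sup>*\<^sup>* 0 x}" "y \<in> {x. E\<^sup>*\<^sup>* 0 x}"
    hence "E\<^sup>*\<^sup>* 0 x" "E\<^sup>*\<^sup>* x (x + y)" using E_trans[of 0 y x] by (auto simp: add.commute)
    thus "x + y \<in> {x. E\<^sup>*\<^sup>* 0 x}" by simp
  next
    fix i
    have "beta ^ i \<in> R" using R_eq beta_mod[of i] n_pos by auto
    hence "E 0 (beta ^ i)" by (simp add: cayley_edge_def)
    thus "beta ^ i \<in> {x. E\<^sup>*\<^sup>* 0 x}" by auto
  qed simp
  hence "E\<^sup>*\<^sup>* u v" for u v using E_trans[of 0 "v - u" u] by auto
  thus ?thesis by (simp add: graph_connected_def)
qed

end


context ctx begin

lemma nbr: "{v. E u v} = (\<lambda>s. u + s) ` R"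
proof (intro equalityI subsetI)
  fix v assume "v \<in> {v. E u v}"
  hence "v - u \<in> R" by (simp add: cayley_edge_def)
  thus "v \<in> (\<lambda>s. u + s) ` R" by (intro image_eqI[of _ _ "v - u"]) auto
qed (auto simp: cayley_edge_def)

lemma nbr_in: "{v. E v u} = (\<lambda>s. u - s) ` R"
proof (intro equalityI subsetI)
  fix v assume "v \<in> {v. E v u}"
  hence "u - v \<in> R" by (simp add: cayley_edge_def)
  thus "v \<in> (\<lambda>s. u - s) ` R" by (intro image_eqI[of _ _ "u - v"]) auto
qed (auto simp: cayley_edge_def)

lemma regular: "graph_regular E n"
  unfolding graph_regular_def nbr nbr_in
  by (simp add: card_image inj_on_def card_R)

lemma adj_sum: "(\<Sum>v\<in>{v. E u v}. f v) = (\<Sum>s\<in>R. f (u + s))"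
  unfolding nbr by (simp add: sum.reindex inj_on_def)

definition L :: "'a \<Rightarrow> complex" where "L g = (\<Sum>s\<in>R. psi (g * s))"

lemma eig_L: "graph_eigenvalue E (L g)"
  unfolding graph_eigenvalue_def
proof (intro exI conjI allI)
  show "(\<lambda>u. psi (g * u)) \<noteq> (\<lambda>_. 0)"
  proof
    assume "(\<lambda>u. psi (g * u)) = (\<lambda>_. 0)"
    hence "psi (g * 0) = 0" by metis
    thus False by simp
  qed
  fix u
  show "(\<Sum>v\<in>{v. E u v}. psi (g * v)) = L g * psi (g * u)"
  proof -
    have "(\<Sum>s\<in>R. psi (g * (u + s))) = (\<Sum>s\<in>R. psi (g * u) * psi (g * s))"
      by (simp add: distrib_left psi_add)
    thus ?thesis unfolding adj_sum L_def by (simp add: sum_distrib_left mult.commute)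
  qed
qed

lemma psi_neg_shift: "psi (- (g * (u + s))) * psi (g * s) = psi (- (g * u))"
proof -
  have e: "- (g * (u + s)) + g * s = - (g * u)" by (simp add: algebra_simps)
  have "psi (- (g * (u + s))) * psi (g * s) = psi (- (g * (u + s)) + g * s)" by (simp only: psi_add)
  also have "\<dots> = psi (- (g * u))" by (simp only: e)
  finally show ?thesis .
qed

lemma psi_sum_cases: "(\<Sum>g\<in>UNIV. psi (g * z)) = (if z = 0 then of_nat q else 0)"
  using psi_sum_mult[of z] card by simp

lemma eig_cases:
  assumes "graph_eigenvalue E lam"
  shows "\<exists>g. lam = L g"
proof -
  obtain f :: "'a \<Rightarrow> complex" where f0: "f \<noteq> (\<lambda>_. 0)"
    and ev: "\<And>u. (\<Sum>v\<in>{v. E u v}. f v) = lam * f u"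
    using assms unfolding graph_eigenvalue_def by blast
  define F where "F g = (\<Sum>u\<in>UNIV. f u * psi (- (g * u)))" for g
  have c1: "lam * F g = L g * F g" for g
  proof -
    have "lam * F g = (\<Sum>u\<in>UNIV. (lam * f u) * psi (- (g * u)))"
      unfolding F_def sum_distrib_left by (simp add: mult.assoc)
    also have "\<dots> = (\<Sum>u\<in>UNIV. (\<Sum>s\<in>R. f (u + s)) * psi (- (g * u)))"
    proof (rule sum.cong[OF refl])
      fix u
      have "lam * f u = (\<Sum>s\<in>R. f (u + s))" using ev[of u] adj_sum[of f u] by simp
      thus "lam * f u * psi (- (g * u)) = (\<Sum>s\<in>R. f (u + s)) * psi (- (g * u))" by simp
    qed
    also have "\<dots> = (\<Sum>s\<in>R. \<Sum>u\<in>UNIV. f (u + s) * psi (- (g * u)))"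
      unfolding sum_distrib_right by (rule sum.swap)
    also have "\<dots> = (\<Sum>s\<in>R. psi (g * s) * F g)"
    proof (rule sum.cong[OF refl])
      fix s
      have "(\<Sum>u\<in>UNIV. f (u + s) * psi (- (g * u))) = (\<Sum>v\<in>UNIV. f v * psi (- (g * (v - s))))"
        by (rule sum.reindex_bij_witness[of _ "\<lambda>v. v - s" "\<lambda>u. u + s"]) auto
      also have "\<dots> = (\<Sum>v\<in>UNIV. psi (g * s) * (f v * psi (- (g * v))))"
      proof (rule sum.cong[OF refl])
        fix v
        have "psi (- (g * (v - s))) = psi (- (g * v)) * psi (g * s)"
          using psi_neg_shift[of g "v - s" s] psi_add[of "- (g * (v - s))" "g * s"]
          by (simp add: algebra_simps)
        thus "f v * psi (- (g * (v - s))) = psi (g * s) * (f v * psi (- (g * v)))" by simp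
      qed
      finally show "(\<Sum>u\<in>UNIV. f (u + s) * psi (- (g * u))) = psi (g * s) * F g"
        by (simp add: F_def sum_distrib_left)
    qed
    finally show ?thesis by (simp add: L_def sum_distrib_right)
  qed
  have c2: "(\<Sum>g\<in>UNIV. F g * psi (g * u)) = of_nat q * f u" for u
  proof -
    have "(\<Sum>g\<in>UNIV. F g * psi (g * u)) = (\<Sum>v\<in>UNIV. f v * (\<Sum>g\<in>UNIV. psi (g * (u - v))))"
    proof -
      have "(\<Sum>g\<in>UNIV. F g * psi (g * u)) = (\<Sum>g\<in>UNIV. \<Sum>v\<in>UNIV. f v * psi (g * (u - v)))"
      proof (rule sum.cong[OF refl])
        fix g
        have "psi (- (g * v)) * psi (g * u) = psi (g * (u - v))" for v
          by (simp add: psi_add[symmetric] algebra_simps)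
        thus "F g * psi (g * u) = (\<Sum>v\<in>UNIV. f v * psi (g * (u - v)))"
          by (simp add: F_def sum_distrib_right mult.assoc)
      qed
      also have "\<dots> = (\<Sum>v\<in>UNIV. f v * (\<Sum>g\<in>UNIV. psi (g * (u - v))))"
        unfolding sum_distrib_left by (rule sum.swap)
      finally show ?thesis .
    qed
    also have "\<dots> = (\<Sum>v\<in>UNIV. if v = u then f v * of_nat q else 0)"
      by (intro sum.cong refl) (simp add: psi_sum_cases)
    also have "\<dots> = of_nat q * f u" by simp
    finally show ?thesis .
  qed
  obtain u where "f u \<noteq> 0" using f0 by auto
  hence "(\<Sum>g\<in>UNIV. F g * psi (g * u)) \<noteq> 0" using c2 p0 by simp
  then obtain g where "F g \<noteq> 0" by (metis (mono_tags, lifting) mult_eq_0_iff sum.neutral)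
  thus ?thesis using c1[of g] by auto
qed

end


context ctx begin

lemma L_beta: "L g = (\<Sum>i<n. chi (Tr (g * beta ^ i)))"
  unfolding L_def R_eq by (simp add: sum.reindex[OF beta_inj] psi_def)

lemma shift_bij:
  assumes t: "t < n"
  shows "bij_betw (\<lambda>i. (i + t) mod n) {..<n} {..<n}"
proof -
  have inj: "inj_on (\<lambda>i. (i + t) mod n) {..<n}"
  proof (rule inj_onI)
    fix i j assume "i \<in> {..<n}" "j \<in> {..<n}" "(i + t) mod n = (j + t) mod n"
    hence "[i + t = j + t] (mod n)" "i < n" "j < n" by (auto simp: cong_def)
    hence "[i = j] (mod n)" by (simp add: cong_add_rcancel_nat)
    thus "i = j" using \<open>i < n\<close> \<open>j < n\<close> by (simp add: cong_def)
  qed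
  moreover have "(\<lambda>i. (i + t) mod n) ` {..<n} \<subseteq> {..<n}" using n_pos by auto
  moreover have "card ((\<lambda>i. (i + t) mod n) ` {..<n}) = card {..<n}" using inj by (simp add: card_image)
  ultimately show ?thesis unfolding bij_betw_def
    by (metis card_subset_eq finite_lessThan)
qed

definition N :: "'a \<Rightarrow> 'a \<Rightarrow> nat" where "N g a = card {i\<in>{..<n}. Tr (g * beta ^ i) = a}"

lemma N_scale:
  assumes c: "c \<in> P" "c \<noteq> 0"
  shows "N g (c * a) = N g a"
proof -
  obtain t where t: "t < n" "c = beta ^ t" using P_in_beta[OF c] by blast
  define sg where "sg i = (i + t) mod n" for i
  have bij: "bij_betw sg {..<n} {..<n}" unfolding sg_def by (rule shift_bij) fact
  have T: "Tr (g * beta ^ sg i) = c * Tr (g * beta ^ i)" for i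
  proof -
    have "beta ^ sg i = beta ^ (i + t)" unfolding sg_def by (simp add: beta_mod[of "i + t"])
    also have "\<dots> = c * beta ^ i" using t by (simp add: power_add mult.commute)
    finally have b: "beta ^ sg i = c * beta ^ i" .
    have "Tr (g * beta ^ sg i) = Tr (c * (g * beta ^ i))" unfolding b by (simp only: mult.left_commute)
    also have "\<dots> = c * Tr (g * beta ^ i)" by (rule Tr_smult[OF c(1)])
    finally show ?thesis .
  qed
  have img: "sg ` {i\<in>{..<n}. Tr (g * beta ^ i) = a} = {i\<in>{..<n}. Tr (g * beta ^ i) = c * a}"
  proof (intro equalityI subsetI)
    fix j assume "j \<in> sg ` {i\<in>{..<n}. Tr (g * beta ^ i) = a}"
    then obtain i where "i < n" "Tr (g * beta ^ i) = a" "j = sg i" by auto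
    thus "j \<in> {i\<in>{..<n}. Tr (g * beta ^ i) = c * a}" using T bij by (auto simp: bij_betw_def)
  next
    fix j assume j: "j \<in> {i\<in>{..<n}. Tr (g * beta ^ i) = c * a}"
    hence "j \<in> sg ` {..<n}" using bij unfolding bij_betw_def by auto
    then obtain i where i: "i < n" "j = sg i" by auto
    hence "c * Tr (g * beta ^ i) = c * a" using T j by auto
    hence "Tr (g * beta ^ i) = a" using c by simp
    thus "j \<in> sg ` {i\<in>{..<n}. Tr (g * beta ^ i) = a}" using i by auto
  qed
  have inj: "inj_on sg {i\<in>{..<n}. Tr (g * beta ^ i) = a}"
    using bij unfolding bij_betw_def by (rule inj_on_subset[OF conjunct1]) auto
  have "card (sg ` {i\<in>{..<n}. Tr (g * beta ^ i) = a}) = card {i\<in>{..<n}. Tr (g * beta ^ i) = a}"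
    by (rule card_image[OF inj])
  thus ?thesis unfolding N_def img .
qed

lemma N_const: "a \<in> P \<Longrightarrow> a \<noteq> 0 \<Longrightarrow> N g a = N g 1"
  using N_scale[of a g 1] by simp

lemma N_sum: "(\<Sum>a\<in>P. N g a) = n"
proof -
  have "(\<Sum>a\<in>P. N g a) = (\<Sum>a\<in>P. \<Sum>i\<in>{i\<in>{..<n}. Tr (g * beta ^ i) = a}. (1::nat))"
    by (simp add: N_def)
  also have "\<dots> = (\<Sum>i<n. (1::nat))"
    by (rule sum.group) (auto simp: finite_P Tr_P)
  finally show ?thesis by simp
qed

lemma N_P0: "(\<Sum>a\<in>P. N g a) = N g 0 + (p - 1) * N g 1"
proof -
  have "(\<Sum>a\<in>P. N g a) = N g 0 + (\<Sum>a\<in>P-{0}. N g a)"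
    by (subst sum.remove[of _ 0]) (auto simp: finite_P)
  also have "(\<Sum>a\<in>P-{0}. N g a) = (\<Sum>a\<in>P-{0}. N g 1)"
    by (intro sum.cong refl) (auto intro: N_const)
  also have "\<dots> = (p - 1) * N g 1" using card_P finite_P by (simp add: card_Diff_singleton)
  finally show ?thesis .
qed

lemma wt_N: "cw_weight p m w k n g = n - N g 0"
proof -
  have e: "{i. i < n \<and> Tr (g * w ^ (k * i)) \<noteq> 0} = {..<n} - {i\<in>{..<n}. Tr (g * beta ^ i) = 0}"
    by (auto simp: beta_def power_mult)
  have "card ({..<n} - {i\<in>{..<n}. Tr (g * beta ^ i) = 0}) = n - card {i\<in>{..<n}. Tr (g * beta ^ i) = 0}"
    by (subst card_Diff_subset) auto
  thus ?thesis unfolding cw_weight_def N_def e .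
qed

lemma L_N: "L g = of_nat (N g 0) - of_nat (N g 1)"
proof -
  have "L g = (\<Sum>a\<in>P. \<Sum>i\<in>{i\<in>{..<n}. Tr (g * beta ^ i) = a}. chi (Tr (g * beta ^ i)))"
    unfolding L_beta by (rule sum.group[symmetric]) (auto simp: finite_P Tr_P)
  also have "\<dots> = (\<Sum>a\<in>P. of_nat (N g a) * chi a)"
    by (intro sum.cong refl) (simp add: N_def)
  also have "\<dots> = of_nat (N g 0) * chi 0 + (\<Sum>a\<in>P-{0}. of_nat (N g a) * chi a)"
    by (subst sum.remove[of _ 0]) (auto simp: finite_P)
  also have "(\<Sum>a\<in>P-{0}. of_nat (N g a) * chi a) = (\<Sum>a\<in>P-{0}. of_nat (N g 1) * chi a)"
    by (intro sum.cong refl) (metis DiffE insertI1 N_const)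
  also have "\<dots> = - of_nat (N g 1)" by (simp add: sum_distrib_left[symmetric] sum_chi_nz)
  finally show ?thesis by simp
qed

lemma L_value: "L g = complex_of_real (real n - real p / (real p - 1) * real (cw_weight p m w k n g))"
proof -
  have e1: "N g 0 + (p - 1) * N g 1 = n" using N_sum N_P0 by simp
  hence wt: "cw_weight p m w k n g = (p - 1) * N g 1" using wt_N by simp
  have rr: "real ((p - 1) * N g 1) = (real p - 1) * real (N g 1)" using p2 by (simp add: of_nat_diff)
  have "real (N g 0 + (p - 1) * N g 1) = real n" using e1 by (rule arg_cong)
  hence "real n = real (N g 0) + real ((p - 1) * N g 1)" unfolding of_nat_add by (rule sym)
  hence r1: "real (N g 0) + (real p - 1) * real (N g 1) = real n" using rr by linarith
  have r2: "real (cw_weight p m w k n g) = (real p - 1) * real (N g 1)"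
    using wt p2 by (simp add: of_nat_diff)
  have pm: "real p - 1 > 0" using p2 by simp
  have "real n - real p / (real p - 1) * real (cw_weight p m w k n g) = real (N g 0) - real (N g 1)"
  proof -
    have a: "real p / (real p - 1) * ((real p - 1) * real (N g 1)) = real p * real (N g 1)" using pm by simp
    have b: "(real p - 1) * real (N g 1) = real p * real (N g 1) - real (N g 1)" by (simp add: algebra_simps)
    show ?thesis unfolding r2 a using r1 b by linarith
  qed
  thus ?thesis unfolding L_N by simp
qed

end


context ctx begin

abbreviation "wt \<equiv> cw_weight p m w k n"

lemma wt0: "wt 0 = 0" by (simp add: cw_weight_def)

lemma fin_W: "finite (code_weights p m w k n)" by (simp add: code_weights_def)

lemma W_nz: "code_weights p m w k n - {0} = wt ` (UNIV - {0})"
proof (intro equalityI subsetI)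
  fix x assume "x \<in> code_weights p m w k n - {0}"
  then obtain g where "x = wt g" "x \<noteq> 0" by (auto simp: code_weights_def)
  moreover hence "g \<noteq> 0" using wt0 by auto
  ultimately show "x \<in> wt ` (UNIV - {0})" by auto
next
  fix x assume "x \<in> wt ` (UNIV - {0})"
  then obtain g where "x = wt g" "g \<noteq> 0" by auto
  thus "x \<in> code_weights p m w k n - {0}" using weight_pos[of g] by (auto simp: code_weights_def)
qed

lemma W_ne: "code_weights p m w k n - {0} \<noteq> {}"
proof -
  have "(1::'a) \<in> UNIV - {0}" by simp
  thus ?thesis unfolding W_nz by blast
qed

lemma dmin: "\<exists>g0. g0 \<noteq> 0 \<and> wt g0 = min_weight p m w k n"
proof -
  have "min_weight p m w k n \<in> code_weights p m w k n - {0}"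
    unfolding min_weight_def using fin_W W_ne by (intro Min_in) auto
  thus ?thesis unfolding W_nz by auto
qed

lemma d_le: "g \<noteq> 0 \<Longrightarrow> min_weight p m w k n \<le> wt g"
  unfolding min_weight_def using fin_W W_nz by (intro Min_le) auto

lemma dmax_ge: "wt g \<le> max_weight p m w k n"
  unfolding max_weight_def using fin_W by (intro Max_ge) (auto simp: code_weights_def)

lemma scale_iff:
  fixes X d :: real
  shows "(real p - 1) / real p * X \<le> d \<longleftrightarrow> X \<le> real p / (real p - 1) * d"
proof -
  have pm: "real p - 1 > 0" "real p > 0" using p2 by auto
  show ?thesis using pm by (simp add: field_simps)
qed

lemma main:
  defines "d \<equiv> real (min_weight p m w k n)"
    and "lam \<equiv> max (real n - real p / (real p - 1) * real (min_weight p m w k n))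
                   (real p / (real p - 1) * real (max_weight p m w k n) - real n)"
  shows "(ramanujan E n \<and> d \<le> (real p - 1) / real p * real n
            \<longrightarrow> d \<ge> (real p - 1) / real p * (real n - 2 * sqrt (real n - 1)))
       \<and> (lam = real n - real p / (real p - 1) * d
            \<longrightarrow> (ramanujan E n
                 \<longleftrightarrow> d \<ge> (real p - 1) / real p * (real n - 2 * sqrt (real n - 1))))"
proof -
  define c where "c = real p / (real p - 1)"
  have c0: "c > 0" using p2 by (simp add: c_def)
  define ev where "ev x = real n - c * x" for x
  define d' where "d' = real (max_weight p m w k n)"
  define s where "s = 2 * sqrt (real n - 1)"
  have lam: "lam = max (ev d) (- ev d')" by (simp add: lam_def ev_def c_def d_def d'_def)
  have key: "d \<ge> (real p - 1) / real p * (real n - s) \<longleftrightarrow> ev d \<le> s"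
    using scale_iff[of "real n - s" d] by (auto simp: ev_def c_def)
  obtain g0 where g0: "g0 \<noteq> 0" "wt g0 = min_weight p m w k n" using dmin by blast
  have dpos: "d > 0" using weight_pos[OF g0(1)] g0(2) by (simp add: d_def)
  have Lg0: "L g0 = complex_of_real (ev d)" using L_value[of g0] g0(2) by (simp add: ev_def c_def d_def)
  have eig0: "graph_eigenvalue E (complex_of_real (ev d))" using eig_L[of g0] Lg0 by simp
  have npos: "real n > 0" using n_pos by simp
  have evd_lt: "ev d < real n" using c0 dpos by (simp add: ev_def)
  have dd': "d \<le> d'" using dmax_ge[of g0] g0(2) by (simp add: d_def d'_def)
  have scale2: "d \<le> (real p - 1) / real p * real n \<longleftrightarrow> c * d \<le> real n"
    using p2 by (simp add: c_def field_simps)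
  have evL: "L g = complex_of_real (ev (real (wt g)))" for g using L_value[of g] by (simp add: ev_def c_def)
  have part1: "ramanujan E n \<and> d \<le> (real p - 1) / real p * real n \<longrightarrow> d \<ge> (real p - 1) / real p * (real n - s)"
  proof
    assume h: "ramanujan E n \<and> d \<le> (real p - 1) / real p * real n"
    hence ge: "ev d \<ge> 0" using scale2 by (simp add: ev_def)
    have "cmod (complex_of_real (ev d)) \<noteq> real n" using ge evd_lt by simp
    hence "cmod (complex_of_real (ev d)) \<le> s" using h eig0 unfolding ramanujan_def s_def by blast
    hence "ev d \<le> s" by simp
    thus "d \<ge> (real p - 1) / real p * (real n - s)" using key by simp
  qed
  have part2: "lam = ev d \<longrightarrow> (ramanujan E n \<longleftrightarrow> d \<ge> (real p - 1) / real p * (real n - s))"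
  proof
    assume lev: "lam = ev d"
    show "ramanujan E n \<longleftrightarrow> d \<ge> (real p - 1) / real p * (real n - s)"
    proof
      assume ram: "ramanujan E n"
      have "\<bar>ev d\<bar> \<noteq> real n"
      proof
        assume "\<bar>ev d\<bar> = real n"
        hence "ev d = - real n" using evd_lt by (auto simp: abs_if split: if_splits)
        moreover have "- ev d' \<le> lam" by (simp add: lam)
        moreover have "ev d' < real n" using c0 dpos dd' by (simp add: ev_def)
        ultimately show False using lev npos by linarith
      qed
      hence "cmod (complex_of_real (ev d)) \<noteq> real n" by simp
      hence "cmod (complex_of_real (ev d)) \<le> s" using ram eig0 unfolding ramanujan_def s_def by blast
      hence "ev d \<le> s" by simp
      thus "d \<ge> (real p - 1) / real p * (real n - s)" using key by simp
    next
      assume "d \<ge> (real p - 1) / real p * (real n - s)"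
      hence evs: "ev d \<le> s" using key by simp
      have "\<forall>la. graph_eigenvalue E la \<longrightarrow> cmod la \<noteq> real n \<longrightarrow> cmod la \<le> s"
      proof (intro allI impI)
        fix la assume ev1: "graph_eigenvalue E la" and nn: "cmod la \<noteq> real n"
        obtain g where g: "la = L g" using eig_cases[OF ev1] by blast
        have "g \<noteq> 0"
        proof
          assume "g = 0"
          hence "la = complex_of_real (real n)" using g evL[of 0] wt0 by (simp add: ev_def)
          thus False using nn by simp
        qed
        hence w1: "d \<le> real (wt g)" "real (wt g) \<le> d'"
          using d_le[of g] dmax_ge[of g] by (auto simp: d_def d'_def)
        have "ev d' \<le> ev (real (wt g))" "ev (real (wt g)) \<le> ev d"
          using w1 c0 by (auto simp: ev_def intro!: mult_left_mono)
        moreover have "- ev d' \<le> ev d" using lev lam by simp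
        ultimately have "\<bar>ev (real (wt g))\<bar> \<le> s" using evs by linarith
        thus "cmod la \<le> s" using g evL[of g] by simp
      qed
      thus "ramanujan E n" unfolding ramanujan_def s_def using connected regular by blast
    qed
  qed
  have e1: "real n - real p / (real p - 1) * d = ev d" by (simp add: ev_def c_def)
  show ?thesis using part1 part2 unfolding e1 s_def by blast
qed

end

theorem corollary5p4:
  fixes w :: "'a::{finite,field}" and p m k n :: nat
  assumes "prime p" and "card (UNIV :: 'a set) = p ^ m"
    and "primitive_element w"
    and "k dvd (p ^ m - 1) div (p - 1)"
    and "n = (p ^ m - 1) div k"
    and "primitive_divisor p m n"
  defines "d \<equiv> real (min_weight p m w k n)"
    and "lam \<equiv> max (real n - real p / (real p - 1) * real (min_weight p m w k n))
                   (real p / (real p - 1) * real (max_weight p m w k n) - real n)"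
  shows "(ramanujan (cayley_edge k :: 'a \<Rightarrow> 'a \<Rightarrow> bool) n \<and> d \<le> (real p - 1) / real p * real n
            \<longrightarrow> d \<ge> (real p - 1) / real p * (real n - 2 * sqrt (real n - 1)))
       \<and> (lam = real n - real p / (real p - 1) * d
            \<longrightarrow> (ramanujan (cayley_edge k :: 'a \<Rightarrow> 'a \<Rightarrow> bool) n
                 \<longleftrightarrow> d \<ge> (real p - 1) / real p * (real n - 2 * sqrt (real n - 1))))"
proof -
  interpret ctx p m w k n using assms(1-6) by unfold_locales
  show ?thesis using main unfolding d_def lam_def .
qed

end
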